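(* Let $D=(V,A)$ be a digraph and $b\in\mathbb{Z}_{>0}^V$ such that $A$ can be partitioned into two $b$-branchings $B_1,B_2$. Let $b'_1,b'_2\in\mathbb{Z}_{\ge0}^V$ satisfy $b'_1+b'_2=d^-_A$, $b'_1\le b$ and $b'_2\le b$. Then $A$ can be partitioned into two $b$-branchings $B'_1,B'_2$ with $d^-_{B'_1}=b'_1$ and $d^-_{B'_2}=b'_2$ if and only if $b'_1(X)<b(X)$ and $b'_2(X)<b(X)$ for every source component $X$ of $D$.
   Context: $d^-_B\in\mathbb{Z}^V$ is the indegree vector of $(V,B)$; for a vector $c$ and $X\subseteq V$, $c(X)=\sum_{v\in X}c(v)$. An arc set $B\subseteq A$ is a $b$-branching if $d^-_B(v)\le b(v)$ for all $v\in V$ and $|B[X]|\le b(X)-1$ for every nonempty $X\subseteq V$, where $B[X]$ is the set of arcs of $B$ with both ends in $X$. A source component of $D$ is a strongly connected component $X$ of $D$ with no arc of $A$ entering $X$. *)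

theory Defs
  imports Main
begin

text \<open>A digraph D = (V, A) is given by a finite vertex set V, a finite set A of arc
  identifiers (parallel arcs allowed), and tail/head maps. An arc a goes from tail a to head a.\<close>

definition digraph :: "'v set \<Rightarrow> 'e set \<Rightarrow> ('e \<Rightarrow> 'v) \<Rightarrow> ('e \<Rightarrow> 'v) \<Rightarrow> bool" where
  "digraph V A tail head \<longleftrightarrow> finite V \<and> finite A \<and> (\<forall>a\<in>A. tail a \<in> V \<and> head a \<in> V)"

definition indeg :: "'e set \<Rightarrow> ('e \<Rightarrow> 'v) \<Rightarrow> 'v \<Rightarrow> int" where
  "indeg B head v = int (card {a \<in> B. head a = v})"

definition vsum :: "('v \<Rightarrow> int) \<Rightarrow> 'v set \<Rightarrow> int" where
  "vsum c X = (\<Sum>v\<in>X. c v)"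

definition induced_arcs :: "'e set \<Rightarrow> ('e \<Rightarrow> 'v) \<Rightarrow> ('e \<Rightarrow> 'v) \<Rightarrow> 'v set \<Rightarrow> 'e set" where
  "induced_arcs B tail head X = {a \<in> B. tail a \<in> X \<and> head a \<in> X}"

definition b_branching ::
  "'v set \<Rightarrow> ('e \<Rightarrow> 'v) \<Rightarrow> ('e \<Rightarrow> 'v) \<Rightarrow> ('v \<Rightarrow> int) \<Rightarrow> 'e set \<Rightarrow> bool" where
  "b_branching V tail head b B \<longleftrightarrow>
     (\<forall>v\<in>V. indeg B head v \<le> b v) \<and>
     (\<forall>X. X \<subseteq> V \<and> X \<noteq> {} \<longrightarrow> int (card (induced_arcs B tail head X)) \<le> vsum b X - 1)"

definition reach :: "'e set \<Rightarrow> ('e \<Rightarrow> 'v) \<Rightarrow> ('e \<Rightarrow> 'v) \<Rightarrow> 'v \<Rightarrow> 'v \<Rightarrow> bool" where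
  "reach A tail head u w \<longleftrightarrow> (u, w) \<in> {(tail a, head a) | a. a \<in> A}\<^sup>*"

definition scc :: "'v set \<Rightarrow> 'e set \<Rightarrow> ('e \<Rightarrow> 'v) \<Rightarrow> ('e \<Rightarrow> 'v) \<Rightarrow> 'v set \<Rightarrow> bool" where
  "scc V A tail head X \<longleftrightarrow> X \<noteq> {} \<and> X \<subseteq> V \<and>
     (\<forall>u\<in>X. \<forall>w\<in>V. w \<in> X \<longleftrightarrow> (reach A tail head u w \<and> reach A tail head w u))"

definition source_component :: "'v set \<Rightarrow> 'e set \<Rightarrow> ('e \<Rightarrow> 'v) \<Rightarrow> ('e \<Rightarrow> 'v) \<Rightarrow> 'v set \<Rightarrow> bool" where
  "source_component V A tail head X \<longleftrightarrow> scc V A tail head X \<and>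
     \<not> (\<exists>a\<in>A. tail a \<notin> X \<and> head a \<in> X)"

end

theory Submission
  imports Defs
begin


definition ent :: "'e set \<Rightarrow> ('e \<Rightarrow> 'v) \<Rightarrow> ('e \<Rightarrow> 'v) \<Rightarrow> 'v set \<Rightarrow> nat" where
 "ent A tail head X = card {a\<in>A. tail a \<notin> X \<and> head a \<in> X}"

definition pp :: "'v set \<Rightarrow> 'v set \<Rightarrow> 'v set \<Rightarrow> nat" where
 "pp R1 R2 X = (if X \<inter> R1 = {} then 1 else 0) + (if X \<inter> R2 = {} then 1 else 0)"

definition arel :: "'e set \<Rightarrow> ('e \<Rightarrow> 'v) \<Rightarrow> ('e \<Rightarrow> 'v) \<Rightarrow> ('v\<times>'v) set" where
 "arel F tail head = {(tail a, head a) | a. a \<in> F}"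

definition good :: "'v set \<Rightarrow> 'e set \<Rightarrow> 'v set \<Rightarrow> ('e \<Rightarrow> 'v) \<Rightarrow> ('e \<Rightarrow> 'v) \<Rightarrow> bool" where
 "good V F R tail head \<longleftrightarrow> (\<forall>w\<in>V. card {a\<in>F. head a = w} \<le> (if w \<in> R then 0 else 1)) \<and>
    (\<forall>w\<in>V. \<exists>r\<in>R. (r,w) \<in> (arel F tail head)\<^sup>*)"

lemma card_filter_sum: "finite A \<Longrightarrow> card {a\<in>A. P a} = (\<Sum>a\<in>A. if P a then 1 else 0)"
  by (simp add: sum.inter_filter[symmetric])

lemma ent_as_sum: "finite A \<Longrightarrow> ent A tail head X = (\<Sum>a\<in>A. if tail a \<notin> X \<and> head a \<in> X then 1 else 0)"
  unfolding ent_def by (rule card_filter_sum)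

lemma ent_submod: assumes "finite A"
  shows "ent A tail head (X\<inter>M) + ent A tail head (X\<union>M) \<le> ent A tail head X + ent A tail head M"
proof -
  have "(\<Sum>a\<in>A. (if tail a \<notin> X\<inter>M \<and> head a \<in> X\<inter>M then 1 else 0) + (if tail a \<notin> X\<union>M \<and> head a \<in> X\<union>M then 1 else 0))
     \<le> (\<Sum>a\<in>A. (if tail a \<notin> X \<and> head a \<in> X then 1 else 0) + (if tail a \<notin> M \<and> head a \<in> M then (1::nat) else 0))"
    by (rule sum_mono) auto
  then show ?thesis using assms by (simp only: ent_as_sum sum.distrib)
qed

lemma ent_remove: assumes "finite A" "e \<in> A"
  shows "ent (A-{e}) tail head X + (if tail e \<notin> X \<and> head e \<in> X then 1 else 0) = ent A tail head X"
  using assms by (simp add: ent_as_sum sum.remove[of A e])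

lemma pp_sym: "pp R2 R1 X = pp R1 R2 X" by (simp add: pp_def)

lemma bad:
  assumes "finite A" "e \<in> A" "tail e \<in> R1" "head e \<notin> R1" "X \<subseteq> V" "X \<noteq> {}"
    and cond: "\<forall>X. X\<subseteq>V \<and> X\<noteq>{} \<longrightarrow> pp R1 R2 X \<le> ent A tail head X"
    and lt: "ent (A-{e}) tail head X < pp (insert (head e) R1) R2 X"
  shows "tail e \<notin> X \<and> head e \<in> X \<and> X\<inter>R2={} \<and> X\<inter>R1\<noteq>{} \<and> ent A tail head X = 1"
proof -
  have r: "ent (A-{e}) tail head X + (if tail e \<notin> X \<and> head e \<in> X then 1 else 0) = ent A tail head X"
    by (rule ent_remove[OF assms(1,2)])
  have c: "pp R1 R2 X \<le> ent A tail head X" using cond assms(5,6) by simp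
  have m: "pp (insert (head e) R1) R2 X \<le> pp R1 R2 X" unfolding pp_def by auto
  have en: "tail e \<notin> X \<and> head e \<in> X"
  proof (rule ccontr)
    assume "\<not> (tail e \<notin> X \<and> head e \<in> X)"
    then have "(if tail e \<notin> X \<and> head e \<in> X then 1 else 0) = (0::nat)" by simp
    then have "ent (A-{e}) tail head X = ent A tail head X" using r by simp
    then show False using c m lt by linarith
  qed
  then have p: "pp (insert (head e) R1) R2 X = (if X \<inter> R2 = {} then 1 else 0)" unfolding pp_def by auto
  have eq: "ent (A-{e}) tail head X + 1 = ent A tail head X" using r en by simp
  have r2: "X \<inter> R2 = {}"
  proof (rule ccontr)
    assume "X \<inter> R2 \<noteq> {}"
    then show False using lt p by simp
  qed
  have e1: "ent A tail head X = 1" using lt p r2 eq by simp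
  have "X \<inter> R1 \<noteq> {}"
  proof
    assume "X \<inter> R1 = {}"
    then have "pp R1 R2 X = 2" using r2 by (simp add: pp_def)
    then show False using c e1 by simp
  qed
  then show ?thesis using en r2 e1 by blast
qed



lemma step:
  assumes fV: "finite V" and fA: "finite A" and arcs: "\<forall>a\<in>A. tail a\<in>V \<and> head a\<in>V"
    and R1V: "R1 \<subseteq> V" and ne: "R1 \<noteq> V"
    and cond: "\<forall>X. X\<subseteq>V \<and> X\<noteq>{} \<longrightarrow> pp R1 R2 X \<le> ent A tail head X"
  shows "\<exists>e\<in>A. tail e \<in> R1 \<and> head e \<in> V - R1 \<and>
     (\<forall>X. X\<subseteq>V \<and> X\<noteq>{} \<longrightarrow> pp (insert (head e) R1) R2 X \<le> ent (A-{e}) tail head X)"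
proof -
  define Q where "Q = {X. X\<subseteq>V \<and> X\<inter>R2={} \<and> X\<inter>R1\<noteq>{} \<and> ent A tail head X = 1 \<and> X-R1\<noteq>{}}"
  show ?thesis
  proof (cases "Q = {}")
    case True
    define X0 where "X0 = V - R1"
    have "X0 \<subseteq> V" "X0 \<noteq> {}" using R1V ne by (auto simp: X0_def)
    then have "pp R1 R2 X0 \<le> ent A tail head X0" using cond by blast
    moreover have "pp R1 R2 X0 \<ge> 1" by (auto simp: pp_def X0_def)
    ultimately have "card {a\<in>A. tail a \<notin> X0 \<and> head a \<in> X0} \<noteq> 0" unfolding ent_def by linarith
    then obtain e where e: "e\<in>A" "tail e \<notin> X0" "head e \<in> X0" by (metis (mono_tags, lifting) card.empty empty_Collect_eq)
    have te: "tail e \<in> R1" "head e \<in> V - R1" using e arcs by (auto simp: X0_def)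
    have "\<forall>X. X\<subseteq>V \<and> X\<noteq>{} \<longrightarrow> pp (insert (head e) R1) R2 X \<le> ent (A-{e}) tail head X"
    proof (intro allI impI)
      fix X assume X: "X\<subseteq>V \<and> X\<noteq>{}"
      show "pp (insert (head e) R1) R2 X \<le> ent (A-{e}) tail head X"
      proof (rule ccontr)
        assume "\<not> ?thesis"
        then have "tail e \<notin> X \<and> head e \<in> X \<and> X\<inter>R2={} \<and> X\<inter>R1\<noteq>{} \<and> ent A tail head X = 1"
          using bad[OF fA e(1) te(1) _ _ _ cond, of X] te X by auto
        then have "X \<in> Q" using X te by (auto simp: Q_def)
        then show False using True by blast
      qed
    qed
    then show ?thesis using e te by blast
  next
    case False
    then obtain X1 where "X1 \<in> Q" by blast
    then obtain M where M: "M \<in> Q" and Mmin: "\<forall>Y. Y \<in> Q \<longrightarrow> card M \<le> card Y"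
      using ex_has_least_nat[of "\<lambda>X. X \<in> Q" X1 card] by blast
    have MV: "M \<subseteq> V" and MR2: "M\<inter>R2={}" and MR1: "M\<inter>R1\<noteq>{}" and Ment: "ent A tail head M = 1"
      and MnR: "M - R1 \<noteq> {}" using M by (auto simp: Q_def)
    define Y where "Y = M - R1"
    have "Y \<subseteq> V" "Y \<noteq> {}" using MV MnR by (auto simp: Y_def)
    then have "pp R1 R2 Y \<le> ent A tail head Y" using cond by blast
    moreover have "pp R1 R2 Y = 2" using MR2 by (auto simp: pp_def Y_def)
    ultimately have c2: "card {a\<in>A. tail a \<notin> Y \<and> head a \<in> Y} \<ge> 2" unfolding ent_def by linarith
    have "\<exists>e\<in>A. tail e \<notin> Y \<and> head e \<in> Y \<and> tail e \<in> M"
    proof (rule ccontr)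
      assume "\<not> ?thesis"
      then have "{a\<in>A. tail a \<notin> Y \<and> head a \<in> Y} \<subseteq> {a\<in>A. tail a \<notin> M \<and> head a \<in> M}"
        by (auto simp: Y_def)
      then have "card {a\<in>A. tail a \<notin> Y \<and> head a \<in> Y} \<le> card {a\<in>A. tail a \<notin> M \<and> head a \<in> M}"
        using fA by (intro card_mono) auto
      then show False using c2 Ment unfolding ent_def by linarith
    qed
    then obtain e where e: "e\<in>A" "tail e \<notin> Y" "head e \<in> Y" "tail e \<in> M" by blast
    have te: "tail e \<in> R1" "head e \<in> V - R1" "head e \<in> M" using e MV by (auto simp: Y_def)
    have fM: "finite M" using MV fV finite_subset by blast
    have "\<forall>X. X\<subseteq>V \<and> X\<noteq>{} \<longrightarrow> pp (insert (head e) R1) R2 X \<le> ent (A-{e}) tail head X"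
    proof (intro allI impI)
      fix X assume X: "X\<subseteq>V \<and> X\<noteq>{}"
      show "pp (insert (head e) R1) R2 X \<le> ent (A-{e}) tail head X"
      proof (rule ccontr)
        assume "\<not> ?thesis"
        then have B: "tail e \<notin> X \<and> head e \<in> X \<and> X\<inter>R2={} \<and> X\<inter>R1\<noteq>{} \<and> ent A tail head X = 1"
          using bad[OF fA e(1) te(1) _ _ _ cond, of X] te X by auto
        have sm: "ent A tail head (X\<inter>M) + ent A tail head (X\<union>M) \<le> 2"
          using ent_submod[OF fA, of tail head X M] B Ment by simp
        have "X \<union> M \<subseteq> V" "X \<union> M \<noteq> {}" using X MV by auto
        then have "pp R1 R2 (X\<union>M) \<le> ent A tail head (X\<union>M)" using cond by blast
        moreover have "pp R1 R2 (X\<union>M) \<ge> 1" using B MR2 by (auto simp: pp_def)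
        ultimately have s1: "ent A tail head (X\<inter>M) \<le> 1" using sm by linarith
        have I: "X \<inter> M \<subseteq> V" "X \<inter> M \<noteq> {}" using X te B by auto
        then have ci: "pp R1 R2 (X\<inter>M) \<le> ent A tail head (X\<inter>M)" using cond by blast
        have i1: "X \<inter> M \<inter> R1 \<noteq> {}"
        proof
          assume "X \<inter> M \<inter> R1 = {}"
          then have "pp R1 R2 (X\<inter>M) = 2" using B by (auto simp: pp_def)
          then show False using ci s1 by linarith
        qed
        have "pp R1 R2 (X\<inter>M) = 1" using i1 B by (auto simp: pp_def)
        then have "ent A tail head (X\<inter>M) = 1" using ci s1 by linarith
        then have "X \<inter> M \<in> Q" using I i1 B te by (auto simp: Q_def)
        then have "card M \<le> card (X \<inter> M)" using Mmin by blast
        moreover have "X \<inter> M \<subset> M" using B e(4) by blast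
        then have "card (X \<inter> M) < card M" using fM by (rule psubset_card_mono[rotated])
        ultimately show False by linarith
      qed
    qed
    then show ?thesis using e te by blast
  qed
qed

lemma good_extend:
  assumes g: "good V F (insert v R) tail head" and "v \<notin> R" "tail e \<in> R" "head e = v" "e \<notin> F" "finite F"
  shows "good V (insert e F) R tail head"
  unfolding good_def
proof (intro conjI ballI)
  fix w assume w: "w \<in> V"
  have "{a\<in>insert e F. head a = w} = (if head e = w then insert e {a\<in>F. head a = w} else {a\<in>F. head a = w})"
    by auto
  moreover have "card {a\<in>F. head a = w} \<le> (if w \<in> insert v R then 0 else 1)" using g w by (auto simp: good_def)
  ultimately show "card {a\<in>insert e F. head a = w} \<le> (if w \<in> R then 0 else 1)"
    using assms by (auto split: if_splits)
next
  fix w assume w: "w \<in> V"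
  obtain r where r: "r \<in> insert v R" "(r,w) \<in> (arel F tail head)\<^sup>*" using g w by (auto simp: good_def)
  have mono: "(arel F tail head)\<^sup>* \<subseteq> (arel (insert e F) tail head)\<^sup>*"
    by (rule rtrancl_mono) (auto simp: arel_def)
  have ev: "(tail e, v) \<in> arel (insert e F) tail head" using assms by (auto simp: arel_def)
  show "\<exists>r\<in>R. (r, w) \<in> (arel (insert e F) tail head)\<^sup>*"
  proof (cases "r = v")
    case True
    then have "(tail e, w) \<in> (arel (insert e F) tail head)\<^sup>*"
      using ev r mono by (meson converse_rtrancl_into_rtrancl subsetD)
    then show ?thesis using assms by blast
  next
    case False
    then show ?thesis using r mono by blast
  qed
qed

lemma edmonds2:
  assumes "finite V" "finite A" "\<forall>a\<in>A. tail a\<in>V \<and> head a\<in>V" "R1\<subseteq>V" "R2\<subseteq>V"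
    "\<forall>X. X\<subseteq>V \<and> X\<noteq>{} \<longrightarrow> pp R1 R2 X \<le> ent A tail head X"
  shows "\<exists>F1 F2. F1\<subseteq>A \<and> F2\<subseteq>A \<and> F1\<inter>F2={} \<and> good V F1 R1 tail head \<and> good V F2 R2 tail head"
  using assms
proof (induction "card(V-R1)+card(V-R2)" arbitrary: A R1 R2 rule: less_induct)
  case less
  show ?case
  proof (cases "R1 = V")
    case False
    obtain e where e: "e\<in>A" "tail e \<in> R1" "head e \<in> V - R1"
      and c: "\<forall>X. X\<subseteq>V \<and> X\<noteq>{} \<longrightarrow> pp (insert (head e) R1) R2 X \<le> ent (A-{e}) tail head X"
      using step[OF less.prems(1,2,3,4) False less.prems(6)] by blast
    have "card (V - insert (head e) R1) < card (V - R1)"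
      using e less.prems(1) by (intro psubset_card_mono) auto
    then have lt: "card (V - insert (head e) R1) + card (V - R2) < card (V - R1) + card (V - R2)" by simp
    have fA': "finite (A-{e})" using less.prems(2) by simp
    have ar': "\<forall>a\<in>A-{e}. tail a\<in>V \<and> head a\<in>V" using less.prems(3) by blast
    have sb: "insert (head e) R1 \<subseteq> V" using e less.prems(4) by blast
    obtain F1 F2 where F: "F1\<subseteq>A-{e}" "F2\<subseteq>A-{e}" "F1\<inter>F2={}"
      "good V F1 (insert (head e) R1) tail head" "good V F2 R2 tail head"
      using less.hyps[OF lt less.prems(1) fA' ar' sb less.prems(5) c] by blast
    have "finite F1" using F(1) less.prems(2) finite_subset by blast
    then have "good V (insert e F1) R1 tail head"
      using e F(1) by (intro good_extend[OF F(4)]) auto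
    moreover have "insert e F1 \<subseteq> A" "F2 \<subseteq> A" "insert e F1 \<inter> F2 = {}" using F e by auto
    ultimately show ?thesis using F(5) by blast
  next
    case True
    show ?thesis
    proof (cases "R2 = V")
      case True2: True
      have g1: "good V {} R1 tail head" using True by (auto simp: good_def)
      have g2: "good V {} R2 tail head" using True2 by (auto simp: good_def)
      show ?thesis by (rule exI[of _ "{}"], rule exI[of _ "{}"]) (simp add: g1 g2)
    next
      case False
      have cs: "\<forall>X. X\<subseteq>V \<and> X\<noteq>{} \<longrightarrow> pp R2 R1 X \<le> ent A tail head X"
        using less.prems(6) pp_sym[of R2 R1] by simp
      obtain e where e: "e\<in>A" "tail e \<in> R2" "head e \<in> V - R2"
        and c: "\<forall>X. X\<subseteq>V \<and> X\<noteq>{} \<longrightarrow> pp (insert (head e) R2) R1 X \<le> ent (A-{e}) tail head X"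
        using step[OF less.prems(1,2,3,5) False cs] by blast
      have c': "\<forall>X. X\<subseteq>V \<and> X\<noteq>{} \<longrightarrow> pp R1 (insert (head e) R2) X \<le> ent (A-{e}) tail head X"
        using c pp_sym[of R1 "insert (head e) R2"] by simp
      have "card (V - insert (head e) R2) < card (V - R2)"
        using e less.prems(1) by (intro psubset_card_mono) auto
      then have lt: "card (V - R1) + card (V - insert (head e) R2) < card (V - R1) + card (V - R2)" by simp
      have fA': "finite (A-{e})" using less.prems(2) by simp
      have ar': "\<forall>a\<in>A-{e}. tail a\<in>V \<and> head a\<in>V" using less.prems(3) by blast
      have sb: "insert (head e) R2 \<subseteq> V" using e less.prems(5) by blast
      obtain F1 F2 where F: "F1\<subseteq>A-{e}" "F2\<subseteq>A-{e}" "F1\<inter>F2={}"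
        "good V F1 R1 tail head" "good V F2 (insert (head e) R2) tail head"
        using less.hyps[OF lt less.prems(1) fA' ar' less.prems(4) sb c'] by blast
      have "finite F2" using F(2) less.prems(2) finite_subset by blast
      then have "good V (insert e F2) R2 tail head"
        using e F(2) by (intro good_extend[OF F(5)]) auto
      moreover have "insert e F2 \<subseteq> A" "F1 \<subseteq> A" "F1 \<inter> insert e F2 = {}" using F e by auto
      ultimately show ?thesis using F(4) by blast
    qed
  qed
qed



lemma count_heads:
  assumes "finite S" "finite Y"
  shows "card {a\<in>S. head a \<in> Y} = (\<Sum>v\<in>Y. card {a\<in>S. head a = v})"
proof -
  have "(\<Sum>v\<in>Y. card {a\<in>S. head a = v}) = (\<Sum>v\<in>Y. \<Sum>a\<in>S. if head a = v then 1 else 0)"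
    using assms by (simp add: card_filter_sum)
  also have "\<dots> = (\<Sum>a\<in>S. \<Sum>v\<in>Y. if head a = v then 1 else 0)" by (rule sum.swap)
  also have "\<dots> = (\<Sum>a\<in>S. if head a \<in> Y then 1 else 0)"
    using assms by (simp add: sum.delta)
  also have "\<dots> = card {a\<in>S. head a \<in> Y}" using assms by (simp add: card_filter_sum)
  finally show ?thesis by simp
qed

lemma in_closed:
  assumes "(r,w) \<in> (arel B tail head)\<^sup>*" "w \<in> Y" "\<forall>a\<in>B. head a \<in> Y \<longrightarrow> tail a \<in> Y"
  shows "r \<in> Y"
proof -
  have "z \<in> Y \<longrightarrow> r \<in> Y" if "(r,z) \<in> (arel B tail head)\<^sup>*" for z
    using that
  proof (induction rule: rtrancl_induct)
    case base
    then show ?case by simp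
  next
    case (step y z)
    then show ?case using assms(3) by (auto simp: arel_def)
  qed
  then show ?thesis using assms by blast
qed

lemma branch_of_reach:
  assumes fV: "finite V" and fB: "finite B" and arcs: "\<forall>a\<in>B. tail a\<in>V \<and> head a\<in>V"
    and deg: "\<forall>v\<in>V. indeg B head v \<le> b v"
    and rch: "\<forall>w\<in>V. \<exists>r\<in>V. indeg B head r < b r \<and> (r,w) \<in> (arel B tail head)\<^sup>*"
  shows "b_branching V tail head b B"
  unfolding b_branching_def
proof (intro conjI allI impI)
  show "\<forall>v\<in>V. indeg B head v \<le> b v" by (rule deg)
  fix Y assume Y: "Y \<subseteq> V \<and> Y \<noteq> {}"
  have fY: "finite Y" using Y fV finite_subset by blast
  define dY where "dY v = card {a\<in>B. tail a \<in> Y \<and> head a = v}" for v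
  have ind: "induced_arcs B tail head Y = {a \<in> {a\<in>B. tail a \<in> Y}. head a \<in> Y}"
    by (auto simp: induced_arcs_def)
  have e1: "{a\<in>{a\<in>B. tail a \<in> Y}. head a = v} = {a\<in>B. tail a \<in> Y \<and> head a = v}" for v by auto
  have cY: "card (induced_arcs B tail head Y) = (\<Sum>v\<in>Y. dY v)"
    unfolding ind dY_def using count_heads[of "{a\<in>B. tail a\<in>Y}" Y head] fB fY e1 by simp
  have dle: "int (dY v) \<le> indeg B head v" for v
    unfolding dY_def indeg_def using fB by (auto intro: card_mono)
  have "\<exists>v\<in>Y. int (dY v) < b v"
  proof (rule ccontr)
    assume "\<not> (\<exists>v\<in>Y. int (dY v) < b v)"
    then have ge: "\<forall>v\<in>Y. b v \<le> int (dY v)" by auto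
    have eqs: "{a\<in>B. tail a \<in> Y \<and> head a = v} = {a\<in>B. head a = v}" if v: "v \<in> Y" for v
    proof (rule card_subset_eq)
      show "finite {a\<in>B. head a = v}" using fB by simp
      show "{a\<in>B. tail a \<in> Y \<and> head a = v} \<subseteq> {a\<in>B. head a = v}" by auto
      have "indeg B head v \<le> b v" using deg v Y by auto
      then show "card {a\<in>B. tail a \<in> Y \<and> head a = v} = card {a\<in>B. head a = v}"
        using ge v dle[of v] unfolding dY_def indeg_def by auto
    qed
    have closed: "\<forall>a\<in>B. head a \<in> Y \<longrightarrow> tail a \<in> Y"
    proof (intro ballI impI)
      fix a assume a: "a \<in> B" "head a \<in> Y"
      then have "a \<in> {a\<in>B. head a = head a}" by simp
      then show "tail a \<in> Y" using eqs[OF a(2)] by blast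
    qed
    obtain w where w: "w \<in> Y" using Y by blast
    then obtain r where r: "r \<in> V" "indeg B head r < b r" "(r,w) \<in> (arel B tail head)\<^sup>*"
      using rch Y by blast
    have "r \<in> Y" using in_closed[OF r(3) w closed] .
    then show False using ge r(2) dle[of r] by force
  qed
  then obtain v0 where v0: "v0 \<in> Y" "int (dY v0) < b v0" by blast
  have "int (card (induced_arcs B tail head Y)) = (\<Sum>v\<in>Y. int (dY v))" by (simp add: cY)
  also have "\<dots> = int (dY v0) + (\<Sum>v\<in>Y-{v0}. int (dY v))" by (rule sum.remove[OF fY v0(1)])
  also have "\<dots> \<le> (b v0 - 1) + (\<Sum>v\<in>Y-{v0}. b v)"
  proof (rule add_mono)
    show "int (dY v0) \<le> b v0 - 1" using v0 by simp
    show "(\<Sum>v\<in>Y-{v0}. int (dY v)) \<le> (\<Sum>v\<in>Y-{v0}. b v)"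
    proof (rule sum_mono)
      fix v assume "v \<in> Y - {v0}"
      then have "v \<in> V" using Y by auto
      then show "int (dY v) \<le> b v" using dle[of v] deg by force
    qed
  qed
  also have "\<dots> = vsum b Y - 1" by (simp add: vsum_def sum.remove[OF fY v0(1)])
  finally show "int (card (induced_arcs B tail head Y)) \<le> vsum b Y - 1" .
qed

lemma reach_arel: "reach A tail head u w \<longleftrightarrow> (u,w) \<in> (arel A tail head)\<^sup>*"
  by (simp add: reach_def arel_def)

lemma source_exists:
  assumes D: "digraph V A tail head" and X: "X \<subseteq> V" "X \<noteq> {}"
    and closed: "\<forall>a\<in>A. head a \<in> X \<longrightarrow> tail a \<in> X"
  shows "\<exists>C. source_component V A tail head C \<and> C \<subseteq> X"
proof -
  have fV: "finite V" and arcs: "\<forall>a\<in>A. tail a \<in> V \<and> head a \<in> V" using D by (auto simp: digraph_def)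
  define Anc where "Anc w = {u\<in>V. reach A tail head u w}" for w
  obtain x0 where "x0 \<in> X" using X by blast
  then obtain w where w: "w \<in> X" and wmin: "\<forall>y. y \<in> X \<longrightarrow> card (Anc w) \<le> card (Anc y)"
    using ex_has_least_nat[of "\<lambda>y. y \<in> X" x0 "\<lambda>y. card (Anc y)"] by blast
  have wV: "w \<in> V" using w X by blast
  have AncX: "Anc w \<subseteq> X"
  proof
    fix u assume "u \<in> Anc w"
    then have "(u,w) \<in> (arel A tail head)\<^sup>*" by (simp add: Anc_def reach_arel)
    then show "u \<in> X" by (rule in_closed[OF _ w closed])
  qed
  define C where "C = {u\<in>V. reach A tail head u w \<and> reach A tail head w u}"
  have wC: "w \<in> C" using wV by (simp add: C_def reach_arel)
  have sc: "scc V A tail head C"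
    unfolding scc_def
  proof (intro conjI ballI)
    show "C \<noteq> {}" using wC by blast
    show "C \<subseteq> V" by (auto simp: C_def)
    fix u z assume u: "u \<in> C" and z: "z \<in> V"
    show "z \<in> C \<longleftrightarrow> reach A tail head u z \<and> reach A tail head z u"
      using u z unfolding C_def reach_arel by (auto intro: rtrancl_trans)
  qed
  have src: "\<not> (\<exists>a\<in>A. tail a \<notin> C \<and> head a \<in> C)"
  proof
    assume "\<exists>a\<in>A. tail a \<notin> C \<and> head a \<in> C"
    then obtain a where a: "a \<in> A" "tail a \<notin> C" "head a \<in> C" by blast
    define t where "t = tail a"
    have tV: "t \<in> V" using a arcs by (simp add: t_def)
    have th: "(t, head a) \<in> (arel A tail head)\<^sup>*" using a(1) by (auto simp: arel_def t_def)
    have hw: "(head a, w) \<in> (arel A tail head)\<^sup>*" "(w, head a) \<in> (arel A tail head)\<^sup>*"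
      using a(3) by (auto simp: C_def reach_arel)
    have tw: "(t, w) \<in> (arel A tail head)\<^sup>*" using th hw(1) by (rule rtrancl_trans)
    then have "t \<in> Anc w" using tV by (simp add: Anc_def reach_arel)
    then have tX: "t \<in> X" using AncX by blast
    have sub: "Anc t \<subseteq> Anc w" using tw by (auto simp: Anc_def reach_arel intro: rtrancl_trans)
    have fin: "finite (Anc w)" using fV by (simp add: Anc_def)
    have "card (Anc w) \<le> card (Anc t)" using wmin tX by blast
    then have "Anc t = Anc w" by (rule card_seteq[OF fin sub])
    moreover have "w \<in> Anc w" using wV by (simp add: Anc_def reach_arel)
    ultimately have "w \<in> Anc t" by simp
    then have "(w, t) \<in> (arel A tail head)\<^sup>*" by (simp add: Anc_def reach_arel)
    then have "t \<in> C" using tV tw by (simp add: C_def reach_arel)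
    then show False using a(2) t_def by simp
  qed
  have "C \<subseteq> X" using AncX by (auto simp: C_def Anc_def)
  then show ?thesis using sc src by (auto simp: source_component_def)
qed

lemma subset_between:
  assumes "finite U" "S \<subseteq> U" "card S \<le> k" "k \<le> card U"
  shows "\<exists>C. S \<subseteq> C \<and> C \<subseteq> U \<and> card C = k"
proof -
  have fS: "finite S" using assms finite_subset by blast
  have "card (U - S) = card U - card S" using assms fS by (simp add: card_Diff_subset)
  then have "k - card S \<le> card (U - S)" using assms by simp
  then obtain D where D: "D \<subseteq> U - S" "card D = k - card S" "finite D"
    by (rule obtain_subset_with_card_n)
  have "card (S \<union> D) = card S + card D" using D fS by (intro card_Un_disjoint) auto
  then show ?thesis using D assms by (intro exI[of _ "S \<union> D"]) auto
qed



lemma nec: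
  assumes BA: "B \<subseteq> A" and br: "b_branching V tail head b B"
    and fA: "finite A" and deg: "\<forall>v\<in>V. indeg B head v = c v"
    and X: "X \<subseteq> V" "X \<noteq> {}" and fX: "finite X"
    and noent: "\<forall>a\<in>A. head a \<in> X \<longrightarrow> tail a \<in> X"
  shows "vsum c X < vsum b X"
proof -
  have fB: "finite B" using BA fA finite_subset by blast
  have "induced_arcs B tail head X = {a\<in>B. head a \<in> X}"
    using BA noent by (auto simp: induced_arcs_def)
  then have "card (induced_arcs B tail head X) = (\<Sum>v\<in>X. card {a\<in>B. head a = v})"
    using count_heads[OF fB fX] by simp
  then have "int (card (induced_arcs B tail head X)) = (\<Sum>v\<in>X. indeg B head v)"
    by (simp add: indeg_def)
  also have "\<dots> = vsum c X" unfolding vsum_def using deg X by (intro sum.cong) (auto simp: subset_iff)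
  finally have "int (card (induced_arcs B tail head X)) = vsum c X" .
  moreover have "int (card (induced_arcs B tail head X)) \<le> vsum b X - 1"
    using br X by (auto simp: b_branching_def)
  ultimately show ?thesis by simp
qed

theorem mainTheorem9:
  fixes V :: "'v set" and A :: "'e set" and tail head :: "'e \<Rightarrow> 'v"
    and b b1' b2' :: "'v \<Rightarrow> int" and B1 B2 :: "'e set"
  assumes D: "digraph V A tail head"
    and b_pos: "\<forall>v\<in>V. b v > 0"
    and part: "B1 \<union> B2 = A" "B1 \<inter> B2 = {}"
    and br1: "b_branching V tail head b B1" and br2: "b_branching V tail head b B2"
    and nn: "\<forall>v\<in>V. b1' v \<ge> 0 \<and> b2' v \<ge> 0"
    and sum: "\<forall>v\<in>V. b1' v + b2' v = indeg A head v"
    and le: "\<forall>v\<in>V. b1' v \<le> b v \<and> b2' v \<le> b v"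
  shows "(\<exists>B1' B2'. B1' \<union> B2' = A \<and> B1' \<inter> B2' = {} \<and>
            b_branching V tail head b B1' \<and> b_branching V tail head b B2' \<and>
            (\<forall>v\<in>V. indeg B1' head v = b1' v \<and> indeg B2' head v = b2' v))
     \<longleftrightarrow> (\<forall>X. source_component V A tail head X \<longrightarrow>
            vsum b1' X < vsum b X \<and> vsum b2' X < vsum b X)"
proof -
  have fV: "finite V" and fA: "finite A" and arcs: "\<forall>a\<in>A. tail a \<in> V \<and> head a \<in> V"
    using D by (auto simp: digraph_def)
  show ?thesis
  proof
    assume "\<exists>B1' B2'. B1' \<union> B2' = A \<and> B1' \<inter> B2' = {} \<and>
            b_branching V tail head b B1' \<and> b_branching V tail head b B2' \<and>
            (\<forall>v\<in>V. indeg B1' head v = b1' v \<and> indeg B2' head v = b2' v)"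
    then obtain B1' B2' where P: "B1' \<union> B2' = A" "b_branching V tail head b B1'" "b_branching V tail head b B2'"
      "\<forall>v\<in>V. indeg B1' head v = b1' v" "\<forall>v\<in>V. indeg B2' head v = b2' v" by blast
    show "\<forall>X. source_component V A tail head X \<longrightarrow> vsum b1' X < vsum b X \<and> vsum b2' X < vsum b X"
    proof (intro allI impI)
      fix X assume sc: "source_component V A tail head X"
      then have X: "X \<subseteq> V" "X \<noteq> {}" and ne: "\<not> (\<exists>a\<in>A. tail a \<notin> X \<and> head a \<in> X)"
        by (auto simp: source_component_def scc_def)
      have fX: "finite X" using X fV finite_subset by blast
      have noent: "\<forall>a\<in>A. head a \<in> X \<longrightarrow> tail a \<in> X" using ne by blast
      have "B1' \<subseteq> A" "B2' \<subseteq> A" using P(1) by auto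
      then show "vsum b1' X < vsum b X \<and> vsum b2' X < vsum b X"
        using nec[OF _ P(2) fA P(4) X fX noent] nec[OF _ P(3) fA P(5) X fX noent] by blast
    qed
  next
    assume cnd: "\<forall>X. source_component V A tail head X \<longrightarrow> vsum b1' X < vsum b X \<and> vsum b2' X < vsum b X"
    define T1 where "T1 = {v\<in>V. b1' v < b v}"
    define T2 where "T2 = {v\<in>V. b2' v < b v}"
    have T1V: "T1 \<subseteq> V" and T2V: "T2 \<subseteq> V" by (auto simp: T1_def T2_def)
    have econd: "\<forall>X. X\<subseteq>V \<and> X\<noteq>{} \<longrightarrow> pp T1 T2 X \<le> ent A tail head X"
    proof (intro allI impI)
      fix X assume X: "X \<subseteq> V \<and> X \<noteq> {}"
      have fX: "finite X" using X fV finite_subset by blast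
      have A2: "ent A tail head X \<ge> 2" if both: "X \<inter> T1 = {}" "X \<inter> T2 = {}"
      proof -
        have bv: "b1' v = b v \<and> b2' v = b v" if vX: "v \<in> X" for v
        proof -
          have vV: "v \<in> V" using X vX by blast
          have "v \<notin> T1" "v \<notin> T2" using both vX by blast+
          then have "\<not> b1' v < b v" "\<not> b2' v < b v" using vV by (auto simp: T1_def T2_def)
          moreover have "b1' v \<le> b v" "b2' v \<le> b v" using le vV by auto
          ultimately show ?thesis by arith
        qed
        have "(\<Sum>v\<in>X. indeg A head v) = (\<Sum>v\<in>X. 2 * b v)"
          using X sum bv by (intro sum.cong) (auto, metis mult_2 subsetD)
        then have s2: "(\<Sum>v\<in>X. indeg A head v) = 2 * vsum b X" by (simp add: vsum_def sum_distrib_left)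
        have "card {a\<in>A. head a \<in> X} = (\<Sum>v\<in>X. card {a\<in>A. head a = v})"
          using count_heads[OF fA fX] .
        then have s1: "int (card {a\<in>A. head a \<in> X}) = (\<Sum>v\<in>X. indeg A head v)"
          by (simp add: indeg_def)
        have spl: "{a\<in>A. head a \<in> X} = induced_arcs A tail head X \<union> {a\<in>A. tail a \<notin> X \<and> head a \<in> X}"
          by (auto simp: induced_arcs_def)
        have "card {a\<in>A. head a \<in> X} = card (induced_arcs A tail head X) + ent A tail head X"
          unfolding spl ent_def using fA by (intro card_Un_disjoint) (auto simp: induced_arcs_def)
        moreover have "induced_arcs A tail head X = induced_arcs B1 tail head X \<union> induced_arcs B2 tail head X"
          using part by (auto simp: induced_arcs_def)
        moreover have "card (induced_arcs B1 tail head X \<union> induced_arcs B2 tail head X)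
            = card (induced_arcs B1 tail head X) + card (induced_arcs B2 tail head X)"
          using part fA by (intro card_Un_disjoint) (auto simp: induced_arcs_def)
        moreover have "int (card (induced_arcs B1 tail head X)) \<le> vsum b X - 1"
          "int (card (induced_arcs B2 tail head X)) \<le> vsum b X - 1"
          using br1 br2 X by (auto simp: b_branching_def)
        ultimately have "int (card {a\<in>A. head a \<in> X}) = int (card (induced_arcs B1 tail head X)) + int (card (induced_arcs B2 tail head X)) + int (ent A tail head X)"
          by simp
        then show ?thesis using s1 s2 \<open>int (card (induced_arcs B1 tail head X)) \<le> vsum b X - 1\<close>
          \<open>int (card (induced_arcs B2 tail head X)) \<le> vsum b X - 1\<close> by linarith
      qed
      have A1: "X \<inter> T1 \<noteq> {} \<and> X \<inter> T2 \<noteq> {}" if e0: "ent A tail head X = 0"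
      proof -
        have "{a\<in>A. tail a \<notin> X \<and> head a \<in> X} = {}" using e0 fA by (simp add: ent_def)
        then have closed: "\<forall>a\<in>A. head a \<in> X \<longrightarrow> tail a \<in> X" by blast
        obtain C where C: "source_component V A tail head C" "C \<subseteq> X"
          using source_exists[OF D _ _ closed] X by blast
        then have lt: "vsum b1' C < vsum b C" "vsum b2' C < vsum b C" using cnd by auto
        have "\<exists>v\<in>C. b1' v < b v"
        proof (rule ccontr)
          assume "\<not> ?thesis"
          then have "vsum b C \<le> vsum b1' C" unfolding vsum_def by (intro sum_mono) auto
          then show False using lt by simp
        qed
        moreover have "\<exists>v\<in>C. b2' v < b v"
        proof (rule ccontr)
          assume "\<not> ?thesis"
          then have "vsum b C \<le> vsum b2' C" unfolding vsum_def by (intro sum_mono) auto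
          then show False using lt by simp
        qed
        ultimately show ?thesis using C X by (auto simp: T1_def T2_def)
      qed
      show "pp T1 T2 X \<le> ent A tail head X"
      proof (cases "X \<inter> T1 = {} \<and> X \<inter> T2 = {}")
        case True
        then show ?thesis using A2 by (simp add: pp_def)
      next
        case False
        then have "pp T1 T2 X \<le> 1" by (auto simp: pp_def)
        moreover have "pp T1 T2 X = 0 \<or> ent A tail head X \<noteq> 0" using A1 by (auto simp: pp_def)
        ultimately show ?thesis by linarith
      qed
    qed
    obtain F1 F2 where F: "F1 \<subseteq> A" "F2 \<subseteq> A" "F1 \<inter> F2 = {}" "good V F1 T1 tail head" "good V F2 T2 tail head"
      using edmonds2[OF fV fA arcs T1V T2V econd] by blast
    define In where "In v = {a\<in>A. head a = v}" for v
    have cIn: "int (card (In v)) = b1' v + b2' v" if "v \<in> V" for v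
      using sum that by (simp add: In_def indeg_def)
    have exC: "\<forall>v\<in>V. \<exists>C. {a\<in>F1. head a = v} \<subseteq> C \<and> C \<subseteq> In v - F2 \<and> card C = nat (b1' v)"
    proof
      fix v assume v: "v \<in> V"
      have c1: "card {a\<in>F1. head a = v} \<le> (if v \<in> T1 then 0 else 1)" using F(4) v by (auto simp: good_def)
      have c2: "card {a\<in>F2. head a = v} \<le> (if v \<in> T2 then 0 else 1)" using F(5) v by (auto simp: good_def)
      have nv: "0 \<le> b1' v" "0 \<le> b2' v" "b1' v \<le> b v" "b2' v \<le> b v" "0 < b v" using nn le b_pos v by auto
      have k1i: "int (card {a\<in>F1. head a = v}) \<le> b1' v"
      proof (cases "v \<in> T1")
        case True then show ?thesis using c1 nv by simp
      next
        case False then have "\<not> b1' v < b v" using v by (simp add: T1_def)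
        then show ?thesis using c1 nv False by simp
      qed
      then have k1: "card {a\<in>F1. head a = v} \<le> nat (b1' v)" by simp
      have k2: "int (card {a\<in>F2. head a = v}) \<le> b2' v"
      proof (cases "v \<in> T2")
        case True then show ?thesis using c2 nv by simp
      next
        case False then have "\<not> b2' v < b v" using v by (simp add: T2_def)
        then show ?thesis using c2 nv False by simp
      qed
      have fIn: "finite (In v)" using fA by (simp add: In_def)
      have "In v - F2 = In v - {a\<in>F2. head a = v}" by (auto simp: In_def)
      moreover have "{a\<in>F2. head a = v} \<subseteq> In v" using F(2) by (auto simp: In_def)
      moreover have "finite F2" using F(2) fA by (rule finite_subset)
      then have "finite {a\<in>F2. head a = v}" by simp
      ultimately have "card (In v - F2) = card (In v) - card {a\<in>F2. head a = v}"
        by (simp add: card_Diff_subset)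
      moreover have "card {a\<in>F2. head a = v} \<le> card (In v)"
        using fIn F(2) by (intro card_mono) (auto simp: In_def)
      ultimately have "int (card (In v - F2)) = int (card (In v)) - int (card {a\<in>F2. head a = v})" by simp
      then have k3: "nat (b1' v) \<le> card (In v - F2)" using cIn[OF v] k2 nn v by auto
      show "\<exists>C. {a\<in>F1. head a = v} \<subseteq> C \<and> C \<subseteq> In v - F2 \<and> card C = nat (b1' v)"
        using F(1,3) fIn k1 k3 by (intro subset_between) (auto simp: In_def)
    qed
    then obtain Cf where Cf: "\<forall>v\<in>V. {a\<in>F1. head a = v} \<subseteq> Cf v \<and> Cf v \<subseteq> In v - F2 \<and> card (Cf v) = nat (b1' v)"
      by metis
    define B1' where "B1' = (\<Union>v\<in>V. Cf v)"
    define B2' where "B2' = A - B1'"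
    have B1A: "B1' \<subseteq> A" using Cf by (auto simp: B1'_def In_def)
    have hB1: "{a\<in>B1'. head a = v} = Cf v" if v: "v \<in> V" for v
    proof
      show "{a\<in>B1'. head a = v} \<subseteq> Cf v"
      proof
        fix a assume a: "a \<in> {a\<in>B1'. head a = v}"
        then obtain w where w: "w \<in> V" "a \<in> Cf w" by (auto simp: B1'_def)
        then have "head a = w" using Cf by (auto simp: In_def)
        then show "a \<in> Cf v" using a w by auto
      qed
      show "Cf v \<subseteq> {a\<in>B1'. head a = v}" using Cf v by (auto simp: B1'_def In_def)
    qed
    have F1B: "F1 \<subseteq> B1'"
    proof
      fix a assume a: "a \<in> F1"
      then have "head a \<in> V" using F(1) arcs by blast
      then show "a \<in> B1'" using Cf a unfolding B1'_def by blast
    qed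
    have F2B: "F2 \<subseteq> B2'" using Cf F(2) by (auto simp: B1'_def B2'_def)
    have fB1: "finite B1'" using B1A fA finite_subset by blast
    have fB2: "finite B2'" using fA by (simp add: B2'_def)
    have d1: "indeg B1' head v = b1' v" if v: "v \<in> V" for v
      using hB1[OF v] Cf v nn by (simp add: indeg_def)
    have d2: "indeg B2' head v = b2' v" if v: "v \<in> V" for v
    proof -
      have "{a\<in>B2'. head a = v} = In v - Cf v" using hB1[OF v] by (auto simp: B2'_def In_def)
      moreover have "Cf v \<subseteq> In v" using Cf v by blast
      moreover have "finite (In v)" using fA by (simp add: In_def)
      ultimately have "card {a\<in>B2'. head a = v} = card (In v) - card (Cf v)"
        by (simp add: card_Diff_subset finite_subset)
      moreover have "card (Cf v) \<le> card (In v)" using \<open>Cf v \<subseteq> In v\<close> \<open>finite (In v)\<close> by (rule card_mono[rotated])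
      ultimately have "int (card {a\<in>B2'. head a = v}) = int (card (In v)) - int (card (Cf v))" by simp
      then show ?thesis using cIn[OF v] Cf v nn by (simp add: indeg_def)
    qed
    have mono1: "(arel F1 tail head)\<^sup>* \<subseteq> (arel B1' tail head)\<^sup>*"
      using F1B by (intro rtrancl_mono) (auto simp: arel_def)
    have mono2: "(arel F2 tail head)\<^sup>* \<subseteq> (arel B2' tail head)\<^sup>*"
      using F2B by (intro rtrancl_mono) (auto simp: arel_def)
    have bb1: "b_branching V tail head b B1'"
    proof (rule branch_of_reach[OF fV fB1])
      show "\<forall>a\<in>B1'. tail a \<in> V \<and> head a \<in> V" using B1A arcs by blast
      show "\<forall>v\<in>V. indeg B1' head v \<le> b v" using d1 le by simp
      show "\<forall>w\<in>V. \<exists>r\<in>V. indeg B1' head r < b r \<and> (r, w) \<in> (arel B1' tail head)\<^sup>*"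
      proof
        fix w assume "w \<in> V"
        then obtain r where "r \<in> T1" "(r,w) \<in> (arel F1 tail head)\<^sup>*" using F(4) by (auto simp: good_def)
        then show "\<exists>r\<in>V. indeg B1' head r < b r \<and> (r, w) \<in> (arel B1' tail head)\<^sup>*"
          using mono1 d1 by (auto simp: T1_def)
      qed
    qed
    have bb2: "b_branching V tail head b B2'"
    proof (rule branch_of_reach[OF fV fB2])
      show "\<forall>a\<in>B2'. tail a \<in> V \<and> head a \<in> V" using arcs by (auto simp: B2'_def)
      show "\<forall>v\<in>V. indeg B2' head v \<le> b v" using d2 le by simp
      show "\<forall>w\<in>V. \<exists>r\<in>V. indeg B2' head r < b r \<and> (r, w) \<in> (arel B2' tail head)\<^sup>*"
      proof
        fix w assume "w \<in> V"
        then obtain r where "r \<in> T2" "(r,w) \<in> (arel F2 tail head)\<^sup>*" using F(5) by (auto simp: good_def)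
        then show "\<exists>r\<in>V. indeg B2' head r < b r \<and> (r, w) \<in> (arel B2' tail head)\<^sup>*"
          using mono2 d2 by (auto simp: T2_def)
      qed
    qed
    have "B1' \<union> B2' = A" "B1' \<inter> B2' = {}" using B1A by (auto simp: B2'_def)
    then show "\<exists>B1' B2'. B1' \<union> B2' = A \<and> B1' \<inter> B2' = {} \<and>
            b_branching V tail head b B1' \<and> b_branching V tail head b B2' \<and>
            (\<forall>v\<in>V. indeg B1' head v = b1' v \<and> indeg B2' head v = b2' v)"
      using bb1 bb2 d1 d2 by blast
  qed
qed


end
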